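(* Let $G$ be a connected graph on vertex set $[n]$ and $\pi$ a permutation of $[n]$ with $rt(G,\pi)>1$. Then $rt(G,\pi)=2$ if and only if the graph $G_{cycle(\pi)}$ has a perfect matching, where a perfect matching is allowed to cover a vertex by a self-loop at that vertex.
   Context: Routing via matchings: each vertex $i$ of $G$ initially holds a pebble which must be moved to vertex $\pi(i)$. A step consists of choosing a matching of $G$ and swapping the pebbles at the endpoints of every matched edge. $rt(G,\pi)$ is the minimum number of steps needed to route all pebbles to their destinations. A cycle of $\pi$ is identified with its vertex set. A cycle $C$ is individually routable (in 2 steps) if its pebbles can be routed to their destinations in at most 2 steps using only edges of the induced subgraph $G[C]$. Two cycles $C_1,C_2$ are mutually routable in 2 steps if the pebbles on $C_1\cup C_2$ can be routed to their destinations in at most 2 steps using only edges of $G$ with one endpoint in $C_1$ and the other in $C_2$. $G_{cycle(\pi)}$ is the graph whose vertices are the cycles of $\pi$, in which two distinct cycles are adjacent iff they are mutually routable in 2 steps, and which has a self-loop at each cycle that is individually routable. *)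

theory Defs
  imports "HOL-Combinatorics.Permutations"
begin

definition graph_on :: "nat \<Rightarrow> nat set set \<Rightarrow> bool" where
  "graph_on n E \<longleftrightarrow> (\<forall>e\<in>E. card e = 2 \<and> e \<subseteq> {..<n})"

definition connected_graph :: "nat \<Rightarrow> nat set set \<Rightarrow> bool" where
  "connected_graph n E \<longleftrightarrow>
     (\<forall>u<n. \<forall>v<n. (\<lambda>x y. {x, y} \<in> E)\<^sup>*\<^sup>* u v)"

definition matching :: "nat set set \<Rightarrow> nat set set \<Rightarrow> bool" where
  "matching E M \<longleftrightarrow> M \<subseteq> E \<and> (\<forall>e1\<in>M. \<forall>e2\<in>M. e1 \<noteq> e2 \<longrightarrow> e1 \<inter> e2 = {})"

text \<open>The movement of pebbles effected by one step with matching M: the pebble at v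
  goes to the other endpoint of the matched edge at v (if any).\<close>
definition swap_of :: "nat set set \<Rightarrow> nat \<Rightarrow> nat" where
  "swap_of M v = (if \<exists>u. u \<noteq> v \<and> {v, u} \<in> M then (THE u. u \<noteq> v \<and> {v, u} \<in> M) else v)"

text \<open>Position of the pebble that started at i after performing the steps in the list.\<close>
definition route :: "nat set set list \<Rightarrow> nat \<Rightarrow> nat" where
  "route ms = fold (\<lambda>M f. swap_of M \<circ> f) ms id"

definition rt :: "nat \<Rightarrow> nat set set \<Rightarrow> (nat \<Rightarrow> nat) \<Rightarrow> nat" where
  "rt n E \<pi> = (LEAST k. \<exists>ms. length ms = k \<and> (\<forall>M\<in>set ms. matching E M)
                              \<and> (\<forall>i<n. route ms i = \<pi> i))"

text \<open>Cycles of \<pi>, identified with their vertex sets (fixed points give 1-cycles).\<close>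
definition cycles_of :: "nat \<Rightarrow> (nat \<Rightarrow> nat) \<Rightarrow> nat set set" where
  "cycles_of n \<pi> = {{(\<pi> ^^ k) i | k. True} | i. i < n}"

definition indiv_routable :: "nat set set \<Rightarrow> (nat \<Rightarrow> nat) \<Rightarrow> nat set \<Rightarrow> bool" where
  "indiv_routable E \<pi> C \<longleftrightarrow>
     (\<exists>ms. length ms \<le> 2 \<and> (\<forall>M\<in>set ms. matching {e\<in>E. e \<subseteq> C} M)
           \<and> (\<forall>i\<in>C. route ms i = \<pi> i))"

definition mutually_routable :: "nat set set \<Rightarrow> (nat \<Rightarrow> nat) \<Rightarrow> nat set \<Rightarrow> nat set \<Rightarrow> bool" where
  "mutually_routable E \<pi> C1 C2 \<longleftrightarrow>
     (\<exists>ms. length ms \<le> 2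
           \<and> (\<forall>M\<in>set ms. matching {e\<in>E. \<exists>a\<in>C1. \<exists>b\<in>C2. e = {a, b}} M)
           \<and> (\<forall>i\<in>C1 \<union> C2. route ms i = \<pi> i))"

definition perfect_matching_loops ::
  "'a set \<Rightarrow> ('a \<Rightarrow> 'a \<Rightarrow> bool) \<Rightarrow> ('a \<Rightarrow> bool) \<Rightarrow> bool" where
  "perfect_matching_loops V adj loop \<longleftrightarrow>
     (\<exists>M. M \<subseteq> {{a, b} | a b. a \<in> V \<and> b \<in> V \<and> a \<noteq> b \<and> adj a b} \<union> {{a} | a. a \<in> V \<and> loop a}
          \<and> (\<forall>v\<in>V. \<exists>!e. e \<in> M \<and> v \<in> e))"

end

theory Submission
  imports Defs "HOL-Combinatorics.Cycles"
begin

lemma swap_of_cong: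
  assumes "\<And>u. u \<noteq> v \<Longrightarrow> ({v,u} \<in> M \<longleftrightarrow> {v,u} \<in> M')"
  shows "swap_of M v = swap_of M' v"
proof -
  have eq: "(\<lambda>u. u \<noteq> v \<and> {v, u} \<in> M) = (\<lambda>u. u \<noteq> v \<and> {v, u} \<in> M')" using assms by blast
  have e: "(\<exists>u. u \<noteq> v \<and> {v,u} \<in> M) = (\<exists>u. u \<noteq> v \<and> {v,u} \<in> M')" using assms by blast
  have t: "(THE u. u \<noteq> v \<and> {v,u} \<in> M) = (THE u. u \<noteq> v \<and> {v,u} \<in> M')"
    by (rule arg_cong[where f=The, OF eq])
  show ?thesis unfolding swap_of_def e t by (rule refl)
qed

lemma matching_disj: "matching F M \<Longrightarrow> e1 \<in> M \<Longrightarrow> e2 \<in> M \<Longrightarrow> e1 \<noteq> e2 \<Longrightarrow> e1 \<inter> e2 = {}"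
  unfolding matching_def by blast

lemma swap_of_edge:
  assumes "matching F M" "{v,u} \<in> M" "u \<noteq> v"
  shows "swap_of M v = u"
proof -
  have uq: "w = u" if w: "w \<noteq> v \<and> {v,w} \<in> M" for w
  proof (rule ccontr)
    assume "w \<noteq> u"
    then have "{v,w} \<noteq> {v,u}" using w assms(3) by (simp add: doubleton_eq_iff)
    then have "{v,w} \<inter> {v,u} = {}" using matching_disj[OF assms(1)] w assms(2) by blast
    then show False by simp
  qed
  have ex: "\<exists>u. u \<noteq> v \<and> {v, u} \<in> M" using assms(2,3) by blast
  have "(THE w. w \<noteq> v \<and> {v,w} \<in> M) = u" 
    by (rule the_equality) (use assms(2,3) uq in blast)+
  then show ?thesis using ex unfolding swap_of_def by simp
qed

lemma swap_of_none:
  assumes "\<And>u. u \<noteq> v \<Longrightarrow> {v,u} \<notin> M"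
  shows "swap_of M v = v"
proof -
  have "\<not> (\<exists>u. u \<noteq> v \<and> {v,u} \<in> M)" using assms by blast
  then show ?thesis unfolding swap_of_def by (rule if_not_P)
qed

lemma swap_of_moved:
  assumes "matching F M" "swap_of M v \<noteq> v" shows "{v, swap_of M v} \<in> M"
proof -
  have "\<exists>u. u \<noteq> v \<and> {v,u} \<in> M"
  proof (rule ccontr)
    assume "\<not> (\<exists>u. u \<noteq> v \<and> {v,u} \<in> M)"
    then have "swap_of M v = v" unfolding swap_of_def by (rule if_not_P)
    then show False using assms(2) by simp
  qed
  then obtain u where "u \<noteq> v" "{v,u} \<in> M" by blast
  then show ?thesis using swap_of_edge[OF assms(1)] by simp
qed

lemma swap_of_invol:
  assumes "matching F M" shows "swap_of M (swap_of M v) = v"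
proof (cases "swap_of M v = v")
  case False
  have "{v, swap_of M v} = {swap_of M v, v}" by blast
  then have "{swap_of M v, v} \<in> M" using swap_of_moved[OF assms False] by simp
  then show ?thesis using swap_of_edge[OF assms] False by simp
qed simp

lemma swap_of_range:
  assumes "graph_on n E" "matching E M" "swap_of M v \<noteq> v"
  shows "v < n \<and> swap_of M v < n"
proof -
  have "M \<subseteq> E" using assms(2) unfolding matching_def by simp
  then have "{v, swap_of M v} \<in> E" using swap_of_moved[OF assms(2,3)] by blast
  then have "{v, swap_of M v} \<subseteq> {..<n}" using assms(1) unfolding graph_on_def by blast
  then show ?thesis by simp
qed

lemma swap_of_empty: "swap_of {} = id"
  by (rule ext) (simp add: swap_of_none)

lemma route_snoc: "route (ms @ [M]) = swap_of M \<circ> route ms"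
  unfolding route_def by simp

lemma route_append: "route (xs @ ys) = route ys \<circ> route xs"
proof (induction ys rule: rev_induct)
  case Nil
  then show ?case by (simp add: route_def)
next
  case (snoc y ys)
  have "route (xs @ ys @ [y]) = route ((xs @ ys) @ [y])" by simp
  also have "\<dots> = swap_of y \<circ> route (xs @ ys)" by (rule route_snoc)
  also have "\<dots> = (swap_of y \<circ> route ys) \<circ> route xs" by (simp only: snoc.IH comp_assoc)
  also have "\<dots> = route (ys @ [y]) \<circ> route xs" by (simp only: route_snoc)
  finally show ?case .
qed

lemma route_simps: "route [] = id" "route [A] = swap_of A" "route [A,B] = swap_of B \<circ> swap_of A"
  by (simp_all add: route_def)

lemma edge_swap:
  assumes "c \<noteq> b" shows "swap_of {{c,b}} = Transposition.transpose c b"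
proof (rule ext)
  fix x
  have m: "matching {{c,b}} {{c,b}}" unfolding matching_def by auto
  show "swap_of {{c,b}} x = Transposition.transpose c b x"
  proof (cases "x = c \<or> x = b")
    case True
    have "{b,c} = {c,b}" by auto
    then have "swap_of {{c,b}} b = c" using swap_of_edge[OF m, of b c] assms by simp
    moreover have "swap_of {{c,b}} c = b" using swap_of_edge[OF m, of c b] assms by simp
    ultimately show ?thesis using True by auto
  next
    case False
    then have "swap_of {{c,b}} x = x" by (intro swap_of_none) (auto simp: doubleton_eq_iff)
    then show ?thesis using False by simp
  qed
qed

lemma transp_gen:
  assumes "graph_on n E" "connected_graph n E" "a < n" "b < n"
  shows "\<exists>ms. (\<forall>M\<in>set ms. matching E M) \<and> route ms = Transposition.transpose a b"
proof -
  have "(\<lambda>x y. {x, y} \<in> E)\<^sup>*\<^sup>* a b" using assms(2,3,4) unfolding connected_graph_def by blast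
  then show ?thesis
  proof (induction rule: rtranclp_induct)
    case base
    then show ?case by (intro exI[of _ "[]"]) (simp add: route_simps)
  next
    case (step c b)
    obtain ms where ms: "\<forall>M\<in>set ms. matching E M" "route ms = Transposition.transpose a c" using step.IH by blast
    have "card {c,b} = 2" using step(2) assms(1) unfolding graph_on_def by blast
    then have cb: "c \<noteq> b" by (cases "c = b") auto
    have mcb: "matching E {{c,b}}" using step(2) unfolding matching_def by auto
    show ?case
    proof (cases "a = c \<or> a = b")
      case True
      then show ?thesis
      proof
        assume "a = c" then show ?thesis using mcb cb
          by (intro exI[of _ "[{{c,b}}]"]) (simp add: route_simps edge_swap)
      next
        assume "a = b" then show ?thesis by (intro exI[of _ "[]"]) (simp add: route_simps)
      qed
    next
      case False
      have "route ([{{c,b}}] @ ms @ [{{c,b}}]) = (swap_of {{c,b}} \<circ> route ms) \<circ> swap_of {{c,b}}"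
        by (simp only: route_append route_simps)
      also have "\<dots> = (Transposition.transpose c b \<circ> Transposition.transpose a c) \<circ> Transposition.transpose c b"
        by (simp only: edge_swap[OF cb] ms(2))
      also have "\<dots> = Transposition.transpose a b"
      proof (rule ext)
        fix x show "((Transposition.transpose c b \<circ> Transposition.transpose a c) \<circ> Transposition.transpose c b) x = Transposition.transpose a b x"
          using False cb by (simp add: Transposition.transpose_def)
      qed
      finally show ?thesis using ms(1) mcb by (intro exI[of _ "[{{c,b}}] @ ms @ [{{c,b}}]"]) auto
    qed
  qed
qed

lemma perm_gen:
  assumes "graph_on n E" "connected_graph n E" "p permutes {..<n}"
  shows "\<exists>ms. (\<forall>M\<in>set ms. matching E M) \<and> route ms = p"
  using assms(3) finite_lessThan
proof (induction rule: permutes_induct)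
  case id
  then show ?case by (intro exI[of _ "[]"]) (simp add: route_simps)
next
  case (swap a b p)
  obtain ms where ms: "\<forall>M\<in>set ms. matching E M" "route ms = p" using swap by auto
  obtain ts where ts: "\<forall>M\<in>set ts. matching E M" "route ts = Transposition.transpose a b"
    using transp_gen[OF assms(1,2), of a b] swap(1,2) by auto
  show ?case using ms ts by (intro exI[of _ "ms @ ts"]) (auto simp: route_append)
qed

definition orb :: "(nat \<Rightarrow> nat) \<Rightarrow> nat \<Rightarrow> nat set" where
  "orb p i = {(p ^^ k) i | k. True}"

lemma orb_self: "i \<in> orb p i"
  unfolding orb_def by (auto intro: exI[of _ 0])

lemma orb_step: "x \<in> orb p y \<Longrightarrow> p x \<in> orb p y"
proof -
  assume "x \<in> orb p y"
  then obtain k where "x = (p ^^ k) y" unfolding orb_def by auto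
  then have "p x = (p ^^ Suc k) y" by simp
  then show ?thesis unfolding orb_def by blast
qed

lemma orb_sub: "x \<in> orb p y \<Longrightarrow> orb p x \<subseteq> orb p y"
proof
  fix z assume "x \<in> orb p y" "z \<in> orb p x"
  then obtain j k where "z = (p ^^ j) x" "x = (p ^^ k) y" unfolding orb_def by auto
  then have "z = (p ^^ (j + k)) y" by (simp add: funpow_add)
  then show "z \<in> orb p y" unfolding orb_def by blast
qed

lemma orb_sym:
  assumes "(p ^^ N) = id" "0 < N" "x \<in> orb p y" shows "y \<in> orb p x"
proof -
  obtain k where x: "x = (p ^^ k) y" using assms(3) unfolding orb_def by auto
  have pk: "(p ^^ (N*k)) = id" using assms(1) by (simp add: funpow_mult[symmetric])
  have "(p ^^ (N*k - k)) x = (p ^^ (N*k - k + k)) y" unfolding x by (simp add: funpow_add)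
  also have "N*k - k + k = N*k" using assms(2) by (simp add: nat_mult_le_cancel1)
  finally have "(p ^^ (N*k - k)) x = y" using pk by simp
  then show ?thesis unfolding orb_def by blast
qed

lemma orb_eq:
  assumes "(p ^^ N) = id" "0 < N" "x \<in> orb p y" shows "orb p x = orb p y"
  using orb_sub orb_sym[OF assms] assms(3) by blast

lemma cycles_orb: "cycles_of n p = orb p ` {..<n}"
  unfolding cycles_of_def orb_def by auto

lemma ex1_uniq: "\<exists>!x. P x \<Longrightarrow> P a \<Longrightarrow> P b \<Longrightarrow> a = b"
  by blast

lemma matching_filter: "matching E M \<Longrightarrow> matching {x\<in>E. P x} {x\<in>M. P x}"
  unfolding matching_def by blast

lemma matching_mono: "matching F A \<Longrightarrow> F \<subseteq> E \<Longrightarrow> matching E A"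
  unfolding matching_def by blast

lemma swap_restrict:
  assumes "matching F M" "M' \<subseteq> M" "swap_of M v \<noteq> v \<Longrightarrow> {v, swap_of M v} \<in> M'"
  shows "swap_of M' v = swap_of M v"
proof (rule swap_of_cong)
  fix u assume u: "u \<noteq> v"
  show "{v, u} \<in> M' \<longleftrightarrow> {v, u} \<in> M"
  proof
    assume "{v,u} \<in> M'" then show "{v,u} \<in> M" using assms(2) by blast
  next
    assume vu: "{v,u} \<in> M"
    then have "swap_of M v = u" using swap_of_edge[OF assms(1) vu u] by simp
    then show "{v,u} \<in> M'" using assms(3) u by simp
  qed
qed

lemma swap_within:
  assumes "matching F M" "i \<in> C" "swap_of M i \<in> C"
  shows "swap_of {x\<in>M. x \<subseteq> C} i = swap_of M i"
proof (rule swap_restrict[OF assms(1)])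
  assume "swap_of M i \<noteq> i"
  then have "{i, swap_of M i} \<in> M" by (rule swap_of_moved[OF assms(1)])
  then show "{i, swap_of M i} \<in> {x\<in>M. x \<subseteq> C}" using assms(2,3) by simp
qed blast

lemma swap_between:
  assumes "matching F M" "i \<in> C \<union> D"
    "i \<in> C \<Longrightarrow> swap_of M i \<in> D" "i \<in> D \<Longrightarrow> swap_of M i \<in> C"
  shows "swap_of {x\<in>M. \<exists>a\<in>C. \<exists>b\<in>D. x = {a,b}} i = swap_of M i"
proof (rule swap_restrict[OF assms(1)])
  assume "swap_of M i \<noteq> i"
  then have e: "{i, swap_of M i} \<in> M" by (rule swap_of_moved[OF assms(1)])
  have "\<exists>a\<in>C. \<exists>b\<in>D. {i, swap_of M i} = {a,b}"
  proof (cases "i \<in> C")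
    case True then show ?thesis using assms(3) by blast
  next
    case False
    then have "i \<in> D" "swap_of M i \<in> C" using assms(2,4) by auto
    moreover have "{i, swap_of M i} = {swap_of M i, i}" by blast
    ultimately show ?thesis by blast
  qed
  then show "{i, swap_of M i} \<in> {x\<in>M. \<exists>a\<in>C. \<exists>b\<in>D. x = {a,b}}" using e by simp
qed blast

lemma pad2:
  assumes "length ms \<le> 2" "\<forall>M\<in>set ms. matching F M"
  shows "\<exists>A B. matching F A \<and> matching F B \<and> route ms = swap_of B \<circ> swap_of A"
proof -
  have mE: "matching F {}" unfolding matching_def by simp
  show ?thesis
  proof (cases ms)
    case Nil
    then show ?thesis using mE by (intro exI[of _ "{}"]) (simp add: route_simps swap_of_empty)
  next
    case (Cons A t)
    show ?thesis
    proof (cases t)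
      case Nil
      then show ?thesis using mE Cons assms(2)
        by (intro exI[of _ A] exI[of _ "{}"]) (simp add: route_simps swap_of_empty)
    next
      case (Cons B t')
      then have "t' = []" using assms(1) \<open>ms = A # t\<close> by simp
      then show ?thesis using Cons \<open>ms = A # t\<close> assms(2)
        by (intro exI[of _ A] exI[of _ B]) (simp add: route_simps)
    qed
  qed
qed

theorem lemma2:
  fixes n :: nat and E :: "nat set set" and \<pi> :: "nat \<Rightarrow> nat"
  assumes "graph_on n E"
    and "connected_graph n E"
    and "\<pi> permutes {..<n}"
    and "rt n E \<pi> > 1"
  shows "rt n E \<pi> = 2 \<longleftrightarrow>
           perfect_matching_loops (cycles_of n \<pi>) (mutually_routable E \<pi>) (indiv_routable E \<pi>)"
proof -
  define Cyc where "Cyc = cycles_of n \<pi>"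
  have Cyc_orb: "Cyc = orb \<pi> ` {..<n}" unfolding Cyc_def by (rule cycles_orb)
  have perm: "permutation \<pi>" using assms(3) permutation_permutes finite_lessThan by blast
  obtain N where N: "(\<pi> ^^ N) = id" "0 < N" using permutation_is_nilpotent[OF perm] by blast
  have piout: "\<pi> x = x" if "\<not> x < n" for x using permutes_not_in[OF assms(3)] that by simp
  have piC: "\<pi> x \<in> C" if "C \<in> Cyc" "x \<in> C" for C x
    using that orb_step unfolding Cyc_orb by blast
  show ?thesis unfolding Cyc_def[symmetric]
  proof
    assume rt2: "rt n E \<pi> = 2"
    obtain ms0 where ms0: "\<forall>M\<in>set ms0. matching E M" "route ms0 = \<pi>"
      using perm_gen[OF assms(1,2,3)] by blast
    have ex: "\<exists>k ms. length ms = k \<and> (\<forall>M\<in>set ms. matching E M) \<and> (\<forall>i<n. route ms i = \<pi> i)"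
      using ms0 by auto
    have "\<exists>ms. length ms = rt n E \<pi> \<and> (\<forall>M\<in>set ms. matching E M) \<and> (\<forall>i<n. route ms i = \<pi> i)"
      unfolding rt_def by (rule LeastI_ex[OF ex])
    then obtain ms where ms: "length ms = 2" "\<forall>M\<in>set ms. matching E M" "\<forall>i<n. route ms i = \<pi> i"
      using rt2 by auto
    obtain M1 M2 where ms12: "ms = [M1, M2]"
      using ms(1) by (auto simp: length_Suc_conv numeral_2_eq_2)
    have m1: "matching E M1" and m2: "matching E M2" using ms(2) ms12 by auto
    define s1 where "s1 = swap_of M1"
    define s2 where "s2 = swap_of M2"
    have inv1: "s1 (s1 x) = x" for x unfolding s1_def by (rule swap_of_invol[OF m1])
    have inv2: "s2 (s2 x) = x" for x unfolding s2_def by (rule swap_of_invol[OF m2])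
    have out1: "s1 x = x" if "\<not> x < n" for x
      using swap_of_range[OF assms(1) m1, of x] that unfolding s1_def by blast
    have out2: "s2 x = x" if "\<not> x < n" for x
      using swap_of_range[OF assms(1) m2, of x] that unfolding s2_def by blast
    have rng1: "s1 x < n" if "x < n" for x
      using swap_of_range[OF assms(1) m1, of x] that unfolding s1_def by (cases "swap_of M1 x = x") auto
    have pis: "\<pi> x = s2 (s1 x)" for x
    proof (cases "x < n")
      case True
      then show ?thesis using ms(3) unfolding ms12 s1_def s2_def by (simp add: route_simps)
    next
      case False
      then show ?thesis using piout out1 out2 by simp
    qed
    have s2pi: "s2 x = \<pi> (s1 x)" for x using pis inv1 by simp
    have key: "s1 x = \<pi> (s1 (\<pi> x))" for x
    proof -
      have "\<pi> (s1 (\<pi> x)) = s2 (\<pi> x)" using s2pi by simp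
      also have "\<dots> = s2 (s2 (s1 x))" using pis by simp
      also have "\<dots> = s1 x" using inv2 by simp
      finally show ?thesis by simp
    qed
    have stepA: "s1 y \<in> orb \<pi> (s1 ((\<pi> ^^ k) y))" for y k
    proof (induction k)
      case 0
      then show ?case by (simp add: orb_self)
    next
      case (Suc k)
      have "s1 ((\<pi> ^^ k) y) = \<pi> (s1 ((\<pi> ^^ Suc k) y))" using key[of "(\<pi> ^^ k) y"] by simp
      then have "s1 ((\<pi> ^^ k) y) \<in> orb \<pi> (s1 ((\<pi> ^^ Suc k) y))" using orb_step[OF orb_self] by simp
      then have "orb \<pi> (s1 ((\<pi> ^^ k) y)) \<subseteq> orb \<pi> (s1 ((\<pi> ^^ Suc k) y))" by (rule orb_sub)
      then show ?case using Suc by blast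
    qed
    have stepB: "s1 ` orb \<pi> y \<subseteq> orb \<pi> (s1 y)" for y
    proof
      fix z assume "z \<in> s1 ` orb \<pi> y"
      then obtain k where z: "z = s1 ((\<pi> ^^ k) y)" unfolding orb_def by auto
      show "z \<in> orb \<pi> (s1 y)" unfolding z by (rule orb_sym[OF N stepA])
    qed
    have img: "s1 ` orb \<pi> y = orb \<pi> (s1 y)" for y
    proof
      show "orb \<pi> (s1 y) \<subseteq> s1 ` orb \<pi> y"
      proof
        fix w assume "w \<in> orb \<pi> (s1 y)"
        then have "s1 w \<in> orb \<pi> y" using stepB[of "s1 y"] inv1 by auto
        then show "w \<in> s1 ` orb \<pi> y" using inv1[of w] by (metis image_eqI)
      qed
    qed (rule stepB)
    have s1Cyc: "s1 ` C \<in> Cyc" if "C \<in> Cyc" for C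
      using that img rng1 unfolding Cyc_orb by auto
    have s1s1: "s1 ` (s1 ` C) = C" for C
      using inv1 by (simp add: image_image)
    have s2C: "s2 x \<in> s1 ` C" if "C \<in> Cyc" "x \<in> C" for C x
    proof -
      have "s1 x \<in> s1 ` C" using that by blast
      then have "\<pi> (s1 x) \<in> s1 ` C" using piC s1Cyc that(1) by blast
      then show ?thesis using s2pi by simp
    qed
    define Mc where "Mc = {{C, s1 ` C} | C. C \<in> Cyc}"
    show "perfect_matching_loops Cyc (mutually_routable E \<pi>) (indiv_routable E \<pi>)"
      unfolding perfect_matching_loops_def
    proof (intro exI[of _ Mc] conjI)
      show "Mc \<subseteq> {{a, b} |a b. a \<in> Cyc \<and> b \<in> Cyc \<and> a \<noteq> b \<and> mutually_routable E \<pi> a b} \<union>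
                 {{a} |a. a \<in> Cyc \<and> indiv_routable E \<pi> a}"
      proof
        fix e assume "e \<in> Mc"
        then obtain C where C: "C \<in> Cyc" "e = {C, s1 ` C}" unfolding Mc_def by blast
        show "e \<in> {{a, b} |a b. a \<in> Cyc \<and> b \<in> Cyc \<and> a \<noteq> b \<and> mutually_routable E \<pi> a b} \<union>
                 {{a} |a. a \<in> Cyc \<and> indiv_routable E \<pi> a}"
        proof (cases "s1 ` C = C")
          case True
          define F where "F = {x\<in>E. x \<subseteq> C}"
          define M1' where "M1' = {x\<in>M1. x \<subseteq> C}"
          define M2' where "M2' = {x\<in>M2. x \<subseteq> C}"
          have "matching F M1'" "matching F M2'" unfolding F_def M1'_def M2'_def
            by (rule matching_filter[OF m1], rule matching_filter[OF m2])
          moreover have "route [M1', M2'] i = \<pi> i" if "i \<in> C" for i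
          proof -
            have a: "s1 i \<in> C" using True that by blast
            have b: "s2 (s1 i) \<in> C" using s2C[OF C(1) a] True by simp
            have "swap_of M1' i = s1 i" unfolding M1'_def s1_def
              by (rule swap_within[OF m1 that]) (use a s1_def in simp)
            moreover have "swap_of M2' (s1 i) = s2 (s1 i)" unfolding M2'_def s2_def
              by (rule swap_within[OF m2 a]) (use b s2_def in simp)
            ultimately show ?thesis using pis by (simp add: route_simps)
          qed
          ultimately have "indiv_routable E \<pi> C" unfolding indiv_routable_def F_def
            by (intro exI[of _ "[M1', M2']"]) auto
          moreover have "e = {C}" using C(2) True by simp
          ultimately show ?thesis using C(1) by blast
        next
          case False
          define D where "D = s1 ` C"
          have DC: "D \<in> Cyc" unfolding D_def using s1Cyc C(1) by blast
          have sD: "s1 ` D = C" unfolding D_def by (rule s1s1)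
          define F where "F = {x\<in>E. \<exists>a\<in>C. \<exists>b\<in>D. x = {a,b}}"
          define M1' where "M1' = {x\<in>M1. \<exists>a\<in>C. \<exists>b\<in>D. x = {a,b}}"
          define M2' where "M2' = {x\<in>M2. \<exists>a\<in>C. \<exists>b\<in>D. x = {a,b}}"
          have "matching F M1'" "matching F M2'" unfolding F_def M1'_def M2'_def
            by (rule matching_filter[OF m1], rule matching_filter[OF m2])
          moreover have "route [M1', M2'] i = \<pi> i" if "i \<in> C \<union> D" for i
          proof -
            have a1: "s1 i \<in> D" if "i \<in> C" using that D_def by blast
            have a2: "s1 i \<in> C" if "i \<in> D" using that sD by blast
            have j: "s1 i \<in> C \<union> D" using a1 a2 \<open>i \<in> C \<union> D\<close> by blast
            have b1: "s2 (s1 i) \<in> D" if "s1 i \<in> C" using s2C[OF C(1) that] D_def by simp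
            have b2: "s2 (s1 i) \<in> C" if "s1 i \<in> D" using s2C[OF DC that] sD by simp
            have "swap_of M1' i = s1 i" unfolding M1'_def s1_def
              by (rule swap_between[OF m1 \<open>i \<in> C \<union> D\<close>]) (use a1 a2 s1_def in simp_all)
            moreover have "swap_of M2' (s1 i) = s2 (s1 i)" unfolding M2'_def s2_def
              by (rule swap_between[OF m2 j]) (use b1 b2 s2_def in simp_all)
            ultimately show ?thesis using pis by (simp add: route_simps)
          qed
          ultimately have "mutually_routable E \<pi> C D" unfolding mutually_routable_def F_def
            by (intro exI[of _ "[M1', M2']"]) auto
          then show ?thesis unfolding C(2) D_def[symmetric]
            by (intro UnI1 CollectI exI[of _ C] exI[of _ D]) (use C(1) DC False D_def in simp)
        qed
      qed
      show "\<forall>v\<in>Cyc. \<exists>!e. e \<in> Mc \<and> v \<in> e"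
      proof
        fix v assume v: "v \<in> Cyc"
        show "\<exists>!e. e \<in> Mc \<and> v \<in> e"
        proof (rule ex1I[of _ "{v, s1 ` v}"])
          show "{v, s1 ` v} \<in> Mc \<and> v \<in> {v, s1 ` v}" using v unfolding Mc_def by blast
        next
          fix e assume e: "e \<in> Mc \<and> v \<in> e"
          then obtain C where C: "C \<in> Cyc" "e = {C, s1 ` C}" unfolding Mc_def by blast
          show "e = {v, s1 ` v}"
          proof (cases "v = C")
            case True then show ?thesis using C by simp
          next
            case False
            then have "v = s1 ` C" using e C by blast
            then have "C = s1 ` v" using s1s1 by simp
            then show ?thesis using C \<open>v = s1 ` C\<close> by blast
          qed
        qed
      qed
    qed
  next
    assume "perfect_matching_loops Cyc (mutually_routable E \<pi>) (indiv_routable E \<pi>)"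
    then obtain Mc where Mcsub: "Mc \<subseteq> {{a, b} |a b. a \<in> Cyc \<and> b \<in> Cyc \<and> a \<noteq> b \<and> mutually_routable E \<pi> a b} \<union>
                 {{a} |a. a \<in> Cyc \<and> indiv_routable E \<pi> a}"
      and Mcu: "\<forall>v\<in>Cyc. \<exists>!e. e \<in> Mc \<and> v \<in> e"
      unfolding perfect_matching_loops_def by (elim exE conjE) (rule that; assumption)
    have Mcex: "\<exists>e. e \<in> Mc \<and> v \<in> e" if "v \<in> Cyc" for v
      using ex1_implies_ex[OF bspec[OF Mcu that]] .
    have Mcuq: "e = e'" if "v \<in> Cyc" "e \<in> Mc" "v \<in> e" "e' \<in> Mc" "v \<in> e'" for v e e'
      using ex1_uniq[OF bspec[OF Mcu that(1)], of e e'] that by blast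
    define Q where "Q e A B \<longleftrightarrow> matching E A \<and> matching E B \<and> (\<forall>x\<in>A. x \<subseteq> \<Union>e) \<and> (\<forall>x\<in>B. x \<subseteq> \<Union>e)
        \<and> (\<forall>i\<in>\<Union>e. swap_of B (swap_of A i) = \<pi> i)" for e A B
    have "\<forall>e\<in>Mc. \<exists>AB. Q e (fst AB) (snd AB)"
    proof
      fix e assume "e \<in> Mc"
      then have "e \<in> {{a, b} |a b. a \<in> Cyc \<and> b \<in> Cyc \<and> a \<noteq> b \<and> mutually_routable E \<pi> a b} \<union>
                 {{a} |a. a \<in> Cyc \<and> indiv_routable E \<pi> a}" using Mcsub by blast
      then show "\<exists>AB. Q e (fst AB) (snd AB)"
      proof
        assume "e \<in> {{a, b} |a b. a \<in> Cyc \<and> b \<in> Cyc \<and> a \<noteq> b \<and> mutually_routable E \<pi> a b}"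
        then obtain a b where e: "e = {a,b}" "mutually_routable E \<pi> a b" by blast
        define F where "F = {x\<in>E. \<exists>c\<in>a. \<exists>d\<in>b. x = {c,d}}"
        obtain ms where ms: "length ms \<le> 2" "\<forall>M\<in>set ms. matching F M" "\<forall>i\<in>a \<union> b. route ms i = \<pi> i"
          using e(2) unfolding mutually_routable_def F_def by blast
        obtain A B where AB: "matching F A" "matching F B" "route ms = swap_of B \<circ> swap_of A"
          using pad2[OF ms(1,2)] by blast
        have FE: "F \<subseteq> E" unfolding F_def by blast
        have Fe: "x \<subseteq> \<Union>e" if "x \<in> F" for x using that unfolding F_def e(1) by blast
        have AF: "A \<subseteq> F" "B \<subseteq> F" using AB(1,2) unfolding matching_def by blast+
        have "Q e A B" unfolding Q_def
        proof (intro conjI)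
          show "matching E A" "matching E B" using matching_mono[OF AB(1) FE] matching_mono[OF AB(2) FE] .
          show "\<forall>x\<in>A. x \<subseteq> \<Union>e" "\<forall>x\<in>B. x \<subseteq> \<Union>e" using AF Fe by blast+
          show "\<forall>i\<in>\<Union>e. swap_of B (swap_of A i) = \<pi> i" using ms(3) AB(3) e(1) by auto
        qed
        then show ?thesis by (intro exI[of _ "(A,B)"]) simp
      next
        assume "e \<in> {{a} |a. a \<in> Cyc \<and> indiv_routable E \<pi> a}"
        then obtain a where e: "e = {a}" "indiv_routable E \<pi> a" by blast
        define F where "F = {x\<in>E. x \<subseteq> a}"
        obtain ms where ms: "length ms \<le> 2" "\<forall>M\<in>set ms. matching F M" "\<forall>i\<in>a. route ms i = \<pi> i"
          using e(2) unfolding indiv_routable_def F_def by blast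
        obtain A B where AB: "matching F A" "matching F B" "route ms = swap_of B \<circ> swap_of A"
          using pad2[OF ms(1,2)] by blast
        have FE: "F \<subseteq> E" unfolding F_def by blast
        have Fe: "x \<subseteq> \<Union>e" if "x \<in> F" for x using that unfolding F_def e(1) by blast
        have AF: "A \<subseteq> F" "B \<subseteq> F" using AB(1,2) unfolding matching_def by blast+
        have "Q e A B" unfolding Q_def
        proof (intro conjI)
          show "matching E A" "matching E B" using matching_mono[OF AB(1) FE] matching_mono[OF AB(2) FE] .
          show "\<forall>x\<in>A. x \<subseteq> \<Union>e" "\<forall>x\<in>B. x \<subseteq> \<Union>e" using AF Fe by blast+
          show "\<forall>i\<in>\<Union>e. swap_of B (swap_of A i) = \<pi> i" using ms(3) AB(3) e(1) by auto
        qed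
        then show ?thesis by (intro exI[of _ "(A,B)"]) simp
      qed
    qed
    from bchoice[OF this] obtain AB where AB: "\<forall>e\<in>Mc. Q e (fst (AB e)) (snd (AB e))" by blast
    define A where "A e = fst (AB e)" for e
    define B where "B e = snd (AB e)" for e
    have QAB: "Q e (A e) (B e)" if "e \<in> Mc" for e using AB that unfolding A_def B_def by blast
    have McCyc: "e \<subseteq> Cyc" if "e \<in> Mc" for e using Mcsub that by blast
    have disj: "e = e'" if h: "e \<in> Mc" "e' \<in> Mc" "i \<in> \<Union>e" "i \<in> \<Union>e'" for e e' i
    proof -
      obtain C where C: "C \<in> e" "i \<in> C" using h(3) by blast
      obtain C' where C': "C' \<in> e'" "i \<in> C'" using h(4) by blast
      have CC: "C \<in> Cyc" "C' \<in> Cyc" using C C' McCyc h(1,2) by blast+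
      obtain x where x: "C = orb \<pi> x" using CC(1) unfolding Cyc_orb by blast
      obtain x' where x': "C' = orb \<pi> x'" using CC(2) unfolding Cyc_orb by blast
      have "orb \<pi> i = C" using orb_eq[OF N] C(2) x by blast
      moreover have "orb \<pi> i = C'" using orb_eq[OF N] C'(2) x' by blast
      ultimately have "C = C'" by simp
      then show ?thesis using Mcuq[OF CC(1) h(1) C(1) h(2)] C'(1) by simp
    qed
    define M1 where "M1 = \<Union>(A ` Mc)"
    define M2 where "M2 = \<Union>(B ` Mc)"
    have mA: "matching E (A e)" "matching E (B e)" "\<forall>x\<in>A e. x \<subseteq> \<Union>e" "\<forall>x\<in>B e. x \<subseteq> \<Union>e"
      if "e \<in> Mc" for e using QAB[OF that] unfolding Q_def by blast+
    have mU: "matching E (\<Union>(X ` Mc))"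
      if X1: "\<And>e. e \<in> Mc \<Longrightarrow> matching E (X e)" and X2: "\<And>e. e \<in> Mc \<Longrightarrow> \<forall>x\<in>X e. x \<subseteq> \<Union>e" for X
      unfolding matching_def
    proof (intro conjI ballI impI)
      show "\<Union>(X ` Mc) \<subseteq> E" using X1 unfolding matching_def by blast
      fix e1 e2 assume e1: "e1 \<in> \<Union>(X ` Mc)" and e2: "e2 \<in> \<Union>(X ` Mc)" and ne: "e1 \<noteq> e2"
      obtain f1 where f1: "f1 \<in> Mc" "e1 \<in> X f1" using e1 by blast
      obtain f2 where f2: "f2 \<in> Mc" "e2 \<in> X f2" using e2 by blast
      show "e1 \<inter> e2 = {}"
      proof (cases "f1 = f2")
        case True
        then show ?thesis using matching_disj[OF X1[OF f1(1)] f1(2) _ ne] f2(2) by blast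
      next
        case False
        show ?thesis
        proof (rule ccontr)
          assume "e1 \<inter> e2 \<noteq> {}"
          then obtain z where "z \<in> e1" "z \<in> e2" by blast
          then have "z \<in> \<Union>f1" "z \<in> \<Union>f2" using X2[OF f1(1)] X2[OF f2(1)] f1(2) f2(2) by blast+
          then show False using disj[OF f1(1) f2(1)] False by blast
        qed
      qed
    qed
    have m1: "matching E M1" unfolding M1_def by (rule mU) (use mA in blast)+
    have m2: "matching E M2" unfolding M2_def by (rule mU) (use mA in blast)+
    have locU: "swap_of (\<Union>(X ` Mc)) i = swap_of (X e) i"
      if X2: "\<And>e. e \<in> Mc \<Longrightarrow> \<forall>x\<in>X e. x \<subseteq> \<Union>e" and e: "e \<in> Mc" "i \<in> \<Union>e" for X e i
    proof (rule swap_of_cong)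
      fix u assume "u \<noteq> i"
      show "{i, u} \<in> \<Union>(X ` Mc) \<longleftrightarrow> {i, u} \<in> X e"
      proof
        assume "{i,u} \<in> \<Union>(X ` Mc)"
        then obtain e' where e': "e' \<in> Mc" "{i,u} \<in> X e'" by blast
        then have "i \<in> \<Union>e'" using X2[OF e'(1)] by blast
        then have "e' = e" using disj[OF e'(1) e(1)] e(2) by blast
        then show "{i,u} \<in> X e" using e' by simp
      qed (use e in blast)
    qed
    have route: "route [M1, M2] i = \<pi> i" if "i < n" for i
    proof -
      have oc: "orb \<pi> i \<in> Cyc" using that unfolding Cyc_orb by blast
      then obtain e where e: "e \<in> Mc" "orb \<pi> i \<in> e" using Mcex by blast
      have ie: "i \<in> \<Union>e" using e(2) orb_self by blast
      define j where "j = swap_of (A e) i"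
      have je: "j \<in> \<Union>e"
      proof (cases "j = i")
        case False
        then have "{i, j} \<in> A e" unfolding j_def by (rule swap_of_moved[OF mA(1)[OF e(1)]])
        then show ?thesis using mA(3)[OF e(1)] by blast
      qed (use ie in simp)
      have "swap_of M1 i = j" unfolding M1_def j_def by (rule locU) (use mA e ie in blast)+
      moreover have "swap_of M2 j = swap_of (B e) j" unfolding M2_def by (rule locU) (use mA e je in blast)+
      moreover have "swap_of (B e) j = \<pi> i" using QAB[OF e(1)] ie unfolding Q_def j_def by blast
      ultimately show ?thesis by (simp add: route_simps)
    qed
    have "rt n E \<pi> \<le> 2" unfolding rt_def
      by (rule Least_le, rule exI[of _ "[M1, M2]"]) (use m1 m2 route in auto)
    then show "rt n E \<pi> = 2" using assms(4) by simp
  qed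
qed

end
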